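(* Let $\mathcal{X}$ be a symmetric configuration $v_3$ having a blocking set $Q$ of cardinality $q$, where $\lceil v/3\rceil\leq q<\lfloor v/2\rfloor$. Then $\mathcal{X}$ also has a blocking set of cardinality $q+1$.
   Context: A symmetric configuration $v_3$ consists of a set of $v$ points and a collection of $v$ blocks, each block being a 3-element subset of the points, such that every point lies in exactly 3 blocks and any two distinct points lie in at most one common block. A blocking set of such a configuration is a subset $Q$ of the points such that every block contains at least one point of $Q$ and at least one point not in $Q$. *)

theory Defs
  imports Main
begin

definition sym_config_v3 :: "'a set \<Rightarrow> 'a set set \<Rightarrow> bool" where
  "sym_config_v3 P B \<longleftrightarrow>
     finite P \<and> finite B \<and> card B = card P \<and>
     (\<forall>b\<in>B. b \<subseteq> P \<and> card b = 3) \<and>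
     (\<forall>x\<in>P. card {b\<in>B. x \<in> b} = 3) \<and>
     (\<forall>x\<in>P. \<forall>y\<in>P. x \<noteq> y \<longrightarrow> card {b\<in>B. x \<in> b \<and> y \<in> b} \<le> 1)"

definition blocking_set :: "'a set \<Rightarrow> 'a set set \<Rightarrow> 'a set \<Rightarrow> bool" where
  "blocking_set P B Q \<longleftrightarrow>
     Q \<subseteq> P \<and> (\<forall>b\<in>B. b \<inter> Q \<noteq> {} \<and> b - Q \<noteq> {})"

end

theory Submission
  imports Defs
begin

lemma double_count:
  assumes "finite Q" "finite B"
  shows "(\<Sum>x\<in>Q. card {b\<in>B. x \<in> b}) = (\<Sum>b\<in>B. card (b \<inter> Q))"
proof -
  have "(\<Sum>x\<in>Q. card {b\<in>B. x \<in> b}) = (\<Sum>x\<in>Q. \<Sum>b\<in>B. if x \<in> b then 1 else 0)"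
    using assms by (simp add: sum.If_cases Int_def conj_commute)
  also have "\<dots> = (\<Sum>b\<in>B. \<Sum>x\<in>Q. if x \<in> b then 1 else 0)"
    by (rule sum.swap)
  also have "\<dots> = (\<Sum>b\<in>B. card (b \<inter> Q))"
  proof (rule sum.cong)
    fix b assume "b \<in> B"
    have "{x\<in>Q. x \<in> b} = b \<inter> Q" by blast
    then show "(\<Sum>x\<in>Q. if x \<in> b then 1 else 0) = card (b \<inter> Q)"
      using assms by (simp add: sum.If_cases Int_commute)
  qed simp
  finally show ?thesis .
qed

theorem mainTheorem1:
  fixes P :: "'a set" and B :: "'a set set" and Q :: "'a set" and q :: nat
  assumes "sym_config_v3 P B"
    and "blocking_set P B Q"
    and "card Q = q"
    and "(card P + 2) div 3 \<le> q"
    and "q < card P div 2"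
  shows "\<exists>Q'. blocking_set P B Q' \<and> card Q' = q + 1"
proof -
  have fP: "finite P" and fB: "finite B" and cB: "card B = card P"
    and bl: "\<And>b. b \<in> B \<Longrightarrow> b \<subseteq> P \<and> card b = 3"
    and deg: "\<And>x. x \<in> P \<Longrightarrow> card {b\<in>B. x \<in> b} = 3"
    using assms(1) unfolding sym_config_v3_def by auto
  have QP: "Q \<subseteq> P" and blk: "\<And>b. b \<in> B \<Longrightarrow> b \<inter> Q \<noteq> {} \<and> b - Q \<noteq> {}"
    using assms(2) unfolding blocking_set_def by auto
  have fQ: "finite Q" using QP fP finite_subset by blast
  define T where "T = {b\<in>B. card (b - Q) = 1}"
  have each: "card (b \<inter> Q) = 1 + (if b \<in> T then 1 else 0)" if "b \<in> B" for b
  proof -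
    have fb: "finite b" using bl[OF that] card.infinite by force
    have s: "card b = card (b \<inter> Q) + card (b - Q)"
      using fb card_Int_Diff by blast
    have "card (b \<inter> Q) \<noteq> 0" "card (b - Q) \<noteq> 0" using blk[OF that] fb by auto
    then show ?thesis using s bl[OF that] that unfolding T_def by auto
  qed
  have "3 * q = (\<Sum>x\<in>Q. card {b\<in>B. x \<in> b})"
    using deg QP assms(3) by (simp add: subset_iff)
  also have "\<dots> = (\<Sum>b\<in>B. card (b \<inter> Q))" using double_count fQ fB by blast
  also have "\<dots> = (\<Sum>b\<in>B. 1 + (if b \<in> T then 1 else 0))" using each by simp
  also have "\<dots> = card B + card T"
  proof -
    have "(\<Sum>b\<in>B. (1::nat) + (if b \<in> T then 1 else 0)) = card B + (\<Sum>b\<in>B. if b \<in> T then 1 else 0)"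
      by (subst sum.distrib) simp
    also have "(\<Sum>b\<in>B. if b \<in> T then 1 else (0::nat)) = card (B \<inter> T)"
      using fB by (simp add: sum.If_cases)
    also have "B \<inter> T = T" unfolding T_def by blast
    finally show ?thesis .
  qed
  finally have eq: "3 * q = card P + card T" using cB by simp
  have "\<exists>x\<in>P - Q. \<forall>b\<in>B. b - Q \<noteq> {x}"
  proof (rule ccontr)
    assume nt: "\<not> ?thesis"
    have "P - Q \<subseteq> (\<lambda>b. the_elem (b - Q)) ` T"
    proof
      fix y assume y: "y \<in> P - Q"
      with nt obtain b where b: "b \<in> B" "b - Q = {y}" by blast
      then have "b \<in> T" unfolding T_def by simp
      moreover have "y = the_elem (b - Q)" using b by simp
      ultimately show "y \<in> (\<lambda>b. the_elem (b - Q)) ` T" by blast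
    qed
    then have "card (P - Q) \<le> card T"
    proof -
      have fT: "finite T" using fB unfolding T_def by simp
      show ?thesis using card_mono[OF finite_imageI[OF fT] \<open>P - Q \<subseteq> _\<close>] card_image_le[OF fT, of "\<lambda>b. the_elem (b - Q)"] by linarith
    qed
    moreover have "card (P - Q) = card P - q" using QP fQ assms(3) card_Diff_subset by metis
    ultimately show False using eq assms(5) QP fP card_mono[OF fP QP] assms(3) by linarith
  qed
  then obtain x where x: "x \<in> P - Q" "\<forall>b\<in>B. b - Q \<noteq> {x}" by blast
  have "blocking_set P B (insert x Q)"
    unfolding blocking_set_def
  proof (intro conjI ballI)
    show "insert x Q \<subseteq> P" using x QP by auto
  next
    fix b assume b: "b \<in> B"
    show "b \<inter> insert x Q \<noteq> {}" using blk[OF b] by auto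
    show "b - insert x Q \<noteq> {}" using blk[OF b] x(2) b by blast
  qed
  moreover have "card (insert x Q) = q + 1" using x fQ assms(3) by simp
  ultimately show ?thesis by blast
qed

end
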